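(* Let $\theta:\mathbb{R}^n\to\mathbb{R}^K$, $x^\star\in\mathbb{R}^n$, $u\in\mathbb{R}^n$, a matrix $J\in\mathbb{R}^{K\times n}$ and a class index $k^\star\in\{1,\dots,K\}$ be such that $\theta(x^\star+\alpha u)-\theta(x^\star)=\alpha Ju$ for all $\alpha>0$. Set $\tilde{x}=x^\star+\alpha u$ and $\Delta\ell(\alpha)=\ell(\tilde{x},\bm{e}_{k^\star};\theta)-\ell(x^\star,\bm{e}_{k^\star};\theta)$. If $\ell=\ell_{CE}$ is the cross-entropy loss, then $$\lim_{\alpha\to\infty}\frac{\Delta\ell_{CE}(\alpha)}{\alpha}=\max_i(Ju)_i-(Ju)_{k^\star}.$$ If $\ell=\ell_{DLR}$ is the DLR loss, then $$\lim_{\alpha\to\infty}\frac{\Delta\ell_{DLR}(\alpha)}{\alpha}=\max_{i\neq k^\star}(Ju)_i-(Ju)_{k^\star}.$$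
   Context: $\bm{e}_k$ is the $k$-th standard basis vector of $\mathbb{R}^K$. Cross-entropy loss: $\ell_{CE}(x,\bm{e}_k;\theta)=-\log\operatorname{softmax}(\theta(x))_k=-\theta(x)_k+\log\sum_{j}e^{\theta(x)_j}$. DLR loss (as used in the paper): $\ell_{DLR}(x,\bm{e}_k;\theta)=\max_{j\neq k}\theta(x)_j-\theta(x)_k$. In the paper this lemma is applied with $J=J_{\bm{D}^\star}$ the constant Jacobian of a ReLU network on an activation cell and $u=u^\star_t$ a direction in the recession cone of that cell, which guarantees the stated affine relation. *)

theory Defs
  imports "HOL-Analysis.Analysis"
begin

text \<open>Cross-entropy loss with one-hot label e_k:
  -log softmax(theta x)_k = -theta(x)_k + log sum_j exp(theta(x)_j).\<close>
definition ce_loss :: "(real^'n \<Rightarrow> real^'k::finite) \<Rightarrow> real^'n \<Rightarrow> 'k \<Rightarrow> real" where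
  "ce_loss \<theta> x k = - (\<theta> x $ k) + ln (\<Sum>j\<in>UNIV. exp (\<theta> x $ j))"

definition dlr_loss :: "(real^'n \<Rightarrow> real^'k::finite) \<Rightarrow> real^'n \<Rightarrow> 'k \<Rightarrow> real" where
  "dlr_loss \<theta> x k = Max {\<theta> x $ j | j. j \<noteq> k} - \<theta> x $ k"

end

theory Submission
  imports Defs
begin

lemma lim_aux:
  fixes f :: "real \<Rightarrow> real"
  assumes "\<And>a. a > 0 \<Longrightarrow> \<bar>f a - a * c\<bar> \<le> B"
  shows "((\<lambda>a. f a / a) \<longlongrightarrow> c) at_top"
proof -
  have "((\<lambda>a. f a / a - c) \<longlongrightarrow> 0) at_top"
  proof (rule Lim_null_comparison)
    show "\<forall>\<^sub>F a in at_top. norm (f a / a - c) \<le> B / a"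
      using eventually_gt_at_top[of 0]
    proof eventually_elim
      case (elim a)
      have "f a / a - c = (f a - a * c) / a" using elim by (simp add: field_simps)
      then show ?case using assms[OF elim] elim by (simp add: abs_divide divide_right_mono)
    qed
    show "((\<lambda>a. B / a) \<longlongrightarrow> 0) at_top"
      by (intro tendsto_divide_0[OF tendsto_const] filterlim_at_top_imp_at_infinity[OF filterlim_ident])
  qed
  then show ?thesis by (simp add: LIM_zero_cancel)
qed

lemma max_img_le: "finite {j. P j} \<Longrightarrow> P j \<Longrightarrow> (g j::real) \<le> Max {g j | j. P j}"
  by (rule Max_ge) auto

lemma max_img_ex: "finite {j. P j} \<Longrightarrow> P j0 \<Longrightarrow> \<exists>j. P j \<and> Max {(g j::real) | j. P j} = g j"
proof -
  assume a: "finite {j. P j}" "P j0"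
  have "{g j | j. P j} = g ` {j. P j}" by auto
  moreover have "Max (g ` {j. P j}) \<in> g ` {j. P j}" using a by (intro Max_in) auto
  ultimately show ?thesis by auto
qed

theorem lemma1:
  fixes \<theta> :: "real^'n \<Rightarrow> real^'k::finite"
    and xs u :: "real^'n"
    and J :: "real^'n^'k"
    and ks :: 'k
  assumes affine: "\<And>\<alpha>::real. \<alpha> > 0 \<Longrightarrow> \<theta> (xs + \<alpha> *\<^sub>R u) - \<theta> xs = \<alpha> *\<^sub>R (J *v u)"
    and K2: "CARD('k) \<ge> 2"
  shows "((\<lambda>\<alpha>. (ce_loss \<theta> (xs + \<alpha> *\<^sub>R u) ks - ce_loss \<theta> xs ks) / \<alpha>)
            \<longlongrightarrow> Max {(J *v u) $ i | i. True} - (J *v u) $ ks) at_top \<and>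
          ((\<lambda>\<alpha>. (dlr_loss \<theta> (xs + \<alpha> *\<^sub>R u) ks - dlr_loss \<theta> xs ks) / \<alpha>)
            \<longlongrightarrow> Max {(J *v u) $ i | i. i \<noteq> ks} - (J *v u) $ ks) at_top"
proof -
  define v where "v = J *v u"
  define t where "t = \<theta> xs"
  define T where "T = (\<Sum>j\<in>UNIV. \<bar>t $ j\<bar>)"
  have tT: "\<bar>t $ j\<bar> \<le> T" for j
    unfolding T_def by (rule member_le_sum) auto
  have th: "\<theta> (xs + a *\<^sub>R u) $ j = t $ j + a * v $ j" if "a > 0" for a j
  proof -
    have "\<theta> (xs + a *\<^sub>R u) = t + a *\<^sub>R v" using affine[OF that] unfolding t_def v_def
      by (simp add: algebra_simps)
    then show ?thesis by simp
  qed
  obtain k2 where k2: "k2 \<noteq> ks"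
  proof -
    have "UNIV - {ks} \<noteq> {}"
    proof
      assume "UNIV - {ks} = {}"
      then have "(UNIV::'k set) = {ks}" by auto
      then have "CARD('k) = card {ks}" by (rule arg_cong)
      then have "CARD('k) = 1" by simp
      then show False using K2 by simp
    qed
    then show ?thesis using that by auto
  qed
  define M where "M = Max {v $ i | i. True}"
  define M' where "M' = Max {v $ i | i. i \<noteq> ks}"
  have fin: "finite {j::'k. P j}" for P by simp
  have vM: "v $ j \<le> M" for j unfolding M_def by (rule max_img_le[OF fin]) simp
  obtain i0 where i0: "M = v $ i0" using max_img_ex[OF fin, of "\<lambda>_. True" ks "\<lambda>j. v $ j"]
    unfolding M_def by auto
  have vM': "v $ j \<le> M'" if "j \<noteq> ks" for j unfolding M'_def by (rule max_img_le[OF fin]) (rule that)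
  obtain i1 where i1: "i1 \<noteq> ks" "M' = v $ i1"
    using max_img_ex[OF fin, of "\<lambda>j. j \<noteq> ks" k2 "\<lambda>j. v $ j"] k2 unfolding M'_def by auto
  have ce: "((\<lambda>a. (ce_loss \<theta> (xs + a *\<^sub>R u) ks - ce_loss \<theta> xs ks) / a) \<longlongrightarrow> M - v $ ks) at_top"
  proof (rule lim_aux[where B = "\<bar>ln (real CARD('k))\<bar> + T + \<bar>ln (\<Sum>j\<in>UNIV. exp (t $ j))\<bar>"])
    fix a :: real assume a: "a > 0"
    define S where "S = (\<Sum>j\<in>UNIV. exp (t $ j + a * v $ j))"
    have lo: "exp (t $ i0 + a * M) \<le> S" unfolding S_def i0
      by (rule member_le_sum) auto
    have "S \<le> (\<Sum>j\<in>(UNIV::'k set). exp (T + a * M))" unfolding S_def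
    proof (rule sum_mono)
      fix j
      have "a * v $ j \<le> a * M" using vM[of j] a by simp
      moreover have "t $ j \<le> T" using tT[of j] by linarith
      ultimately have "t $ j + a * v $ j \<le> T + a * M" by linarith
      then show "exp (t $ j + a * v $ j) \<le> exp (T + a * M)" by simp
    qed
    then have hi: "S \<le> real CARD('k) * exp (T + a * M)" by simp
    have Spos: "S > 0" using lo exp_gt_zero[of "t $ i0 + a * M"] by linarith
    have l1: "t $ i0 + a * M \<le> ln S" using ln_le_cancel_iff[of "exp (t $ i0 + a * M)" S] lo Spos by simp
    have cpos: "real CARD('k) > 0" by simp
    have "ln S \<le> ln (real CARD('k) * exp (T + a * M))" using hi Spos by simp
    also have "\<dots> = ln (real CARD('k)) + T + a * M" using cpos by (simp add: ln_mult)
    finally have l2: "ln S \<le> ln (real CARD('k)) + T + a * M" .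
    have eq: "ce_loss \<theta> (xs + a *\<^sub>R u) ks - ce_loss \<theta> xs ks - a * (M - v $ ks)
       = ln S - a * M - ln (\<Sum>j\<in>UNIV. exp (t $ j))"
      unfolding ce_loss_def S_def th[OF a] t_def[symmetric] by (simp add: algebra_simps)
    show "\<bar>ce_loss \<theta> (xs + a *\<^sub>R u) ks - ce_loss \<theta> xs ks - a * (M - v $ ks)\<bar>
      \<le> \<bar>ln (real CARD('k))\<bar> + T + \<bar>ln (\<Sum>j\<in>UNIV. exp (t $ j))\<bar>"
      unfolding eq using l1 l2 tT[of i0] by linarith
  qed
  have dlr: "((\<lambda>a. (dlr_loss \<theta> (xs + a *\<^sub>R u) ks - dlr_loss \<theta> xs ks) / a) \<longlongrightarrow> M' - v $ ks) at_top"
  proof (rule lim_aux[where B = "2 * T"])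
    fix a :: real assume a: "a > 0"
    define D where "D = Max {t $ j + a * v $ j | j. j \<noteq> ks}"
    define D0 where "D0 = Max {t $ j | j. j \<noteq> ks}"
    have "t $ i1 + a * v $ i1 \<le> D" unfolding D_def by (rule max_img_le[OF fin]) (rule i1(1))
    then have d1: "t $ i1 + a * M' \<le> D" using i1 by simp
    obtain j1 where j1: "j1 \<noteq> ks" "D = t $ j1 + a * v $ j1"
      using max_img_ex[OF fin, of "\<lambda>j. j \<noteq> ks" k2 "\<lambda>j. t $ j + a * v $ j"] k2 unfolding D_def by auto
    have "a * v $ j1 \<le> a * M'" using vM'[OF j1(1)] a by simp
    then have d2: "D \<le> t $ j1 + a * M'" using j1 by simp
    have "t $ k2 \<le> D0" unfolding D0_def by (rule max_img_le[OF fin]) (rule k2)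
    obtain j2 where j2: "j2 \<noteq> ks" "D0 = t $ j2"
      using max_img_ex[OF fin, of "\<lambda>j. j \<noteq> ks" k2 "\<lambda>j. t $ j"] k2 unfolding D0_def by auto
    have eq: "dlr_loss \<theta> (xs + a *\<^sub>R u) ks - dlr_loss \<theta> xs ks - a * (M' - v $ ks)
       = D - a * M' - D0"
      unfolding dlr_loss_def D_def D0_def th[OF a] t_def[symmetric] by (simp add: algebra_simps)
    show "\<bar>dlr_loss \<theta> (xs + a *\<^sub>R u) ks - dlr_loss \<theta> xs ks - a * (M' - v $ ks)\<bar> \<le> 2 * T"
      unfolding eq using d1 d2 j2 tT[of i1] tT[of j1] tT[of j2] by linarith
  qed
  show ?thesis using ce dlr unfolding M_def M'_def v_def by simp
qed

end
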